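(* Let $n \geq 2$ be an integer and let $$\mathbf{S} = \Big\{(x_1,\ldots,x_n) \in \mathbb{R}^n \;:\; \sum_{i=1}^n x_i = 1,\; x_i \geq 0 \text{ for } i=1,\ldots,n\Big\}.$$ Let $f$ be a real-valued function that is convex and continuous on $\mathbf{S}$ and differentiable on $\mathbf{S}$ (i.e. $f$ is the restriction to $\mathbf{S}$ of a function differentiable on an open neighborhood of $\mathbf{S}$ in $\mathbb{R}^n$). Fix constants $s>0$ and $\rho>1$ and put $\delta_k = s/\rho^k$ for $k \in \mathbb{N}$. Let $\mathbf{u}=(u_1,\ldots,u_n) \in \mathbf{S}$ with $u_j>0$ for all $j$. For $i=1,\ldots,n$ and $k\in\mathbb{N}$ define $\mathbf{u}_k^{(i+)}, \mathbf{u}_k^{(i-)} \in \mathbb{R}^n$ by $$\big(\mathbf{u}_k^{(i+)}\big)_i = u_i + \delta_k,\qquad \big(\mathbf{u}_k^{(i+)}\big)_j = u_j - \frac{\delta_k}{n-1}\ (j\neq i),$$ $$\big(\mathbf{u}_k^{(i-)}\big)_i = u_i - \delta_k,\qquad \big(\mathbf{u}_k^{(i-)}\big)_j = u_j + \frac{\delta_k}{n-1}\ (j\neq i).$$ Suppose that for every $k\in\mathbb{N}$ and every $i\in\{1,\ldots,n\}$ we have $f(\mathbf{u}) \leq f(\mathbf{u}_k^{(i+)})$ whenever $\mathbf{u}_k^{(i+)} \in \mathbf{S}$, and $f(\mathbf{u}) \leq f(\mathbf{u}_k^{(i-)})$ whenever $\mathbf{u}_k^{(i-)} \in \mathbf{S}$.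 Then $\mathbf{u}$ is a global minimizer of $f$ on $\mathbf{S}$, i.e. $f(\mathbf{u}) \leq f(\mathbf{x})$ for all $\mathbf{x}\in\mathbf{S}$.
   Context: $\mathbb{N}$ denotes the positive integers. The points $\mathbf{u}_k^{(i\pm)}$ are obtained from $\mathbf{u}$ by moving the $i$-th coordinate by $\pm\delta_k$ and compensating equally in the other $n-1$ coordinates so that the coordinate sum stays equal to $1$; they lie in $\mathbf{S}$ exactly when all their coordinates are nonnegative. *)

theory Defs
  imports "HOL-Analysis.Analysis"
begin

definition std_simplex :: "(real ^ 'n) set" where
  "std_simplex = {x. (\<Sum>i\<in>UNIV. x $ i) = 1 \<and> (\<forall>i. 0 \<le> x $ i)}"

definition differentiable_on_closed_set :: "((real ^ 'n) \<Rightarrow> real) \<Rightarrow> (real ^ 'n) set \<Rightarrow> bool" where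
  "differentiable_on_closed_set f S \<longleftrightarrow>
     (\<exists>U g. open U \<and> S \<subseteq> U \<and> (\<forall>x\<in>U. g differentiable (at x)) \<and> (\<forall>x\<in>S. g x = f x))"

definition delta :: "real \<Rightarrow> real \<Rightarrow> nat \<Rightarrow> real" where
  "delta s \<rho> k = s / \<rho> ^ k"

definition u_plus :: "real ^ 'n \<Rightarrow> real \<Rightarrow> 'n \<Rightarrow> real ^ 'n" where
  "u_plus u d i = (\<chi> j. if j = i then u $ i + d else u $ j - d / (real CARD('n) - 1))"

definition u_minus :: "real ^ 'n \<Rightarrow> real \<Rightarrow> 'n \<Rightarrow> real ^ 'n" where
  "u_minus u d i = (\<chi> j. if j = i then u $ i - d else u $ j + d / (real CARD('n) - 1))"

end

theory Submission imports Defs begin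

lemma dir_deriv:
  fixes g :: "real ^ 'n \<Rightarrow> real"
  assumes "(g has_derivative D) (at u)"
  shows "((\<lambda>t. g (u + t *\<^sub>R v)) has_real_derivative D v) (at 0)"
proof -
  have l: "((\<lambda>t::real. u + t *\<^sub>R v) has_derivative (\<lambda>t. t *\<^sub>R v)) (at 0)"
    by (auto intro!: derivative_eq_intros)
  have g: "(g has_derivative D) (at (u + 0 *\<^sub>R v))" using assms by simp
  have "((\<lambda>t. g (u + t *\<^sub>R v)) has_derivative (\<lambda>t. D (t *\<^sub>R v))) (at 0)"
    using has_derivative_compose[OF l g] by (simp add: o_def)
  moreover have "(\<lambda>t. D (t *\<^sub>R v)) = (\<lambda>t. D v * t)"
    using has_derivative_linear[OF assms] by (auto simp: linear_scale)
  ultimately show ?thesis by (simp add: has_field_derivative_def)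
qed

lemma sum_if_const:
  fixes a :: "'n::finite \<Rightarrow> real"
  shows "(\<Sum>j\<in>UNIV. (if j = i then 1 else c) * a j) = c * sum a UNIV + (1 - c) * a i"
proof -
  have "(\<Sum>j\<in>UNIV. (if j = i then 1 else c) * a j) = (\<Sum>j\<in>UNIV. c * a j + (if j = i then (1 - c) * a j else 0))"
    by (rule sum.cong) (auto simp: algebra_simps)
  also have "\<dots> = c * sum a UNIV + (1 - c) * a i"
    by (simp add: sum.distrib sum_distrib_left)
  finally show ?thesis .
qed

theorem theorem1:
  fixes f :: "real ^ 'n \<Rightarrow> real" and s \<rho> :: real and u :: "real ^ 'n"
  assumes "CARD('n) \<ge> 2"
    and "convex_on std_simplex f"
    and "continuous_on std_simplex f"
    and "differentiable_on_closed_set f std_simplex"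
    and "s > 0" and "\<rho> > 1"
    and "u \<in> std_simplex" and "\<forall>j. u $ j > 0"
    and "\<forall>k::nat. k \<ge> 1 \<longrightarrow> (\<forall>i.
           (u_plus u (delta s \<rho> k) i \<in> std_simplex \<longrightarrow> f u \<le> f (u_plus u (delta s \<rho> k) i)) \<and>
           (u_minus u (delta s \<rho> k) i \<in> std_simplex \<longrightarrow> f u \<le> f (u_minus u (delta s \<rho> k) i)))"
  shows "\<forall>x\<in>std_simplex. f u \<le> f x"
proof -
  note hyp = assms(9)
  obtain U g where U: "open U" "std_simplex \<subseteq> U" "\<forall>x\<in>U. g differentiable (at x)"
    and gf: "\<forall>x\<in>std_simplex. g x = f x"
    using assms(4) unfolding differentiable_on_closed_set_def by blast
  have "g differentiable (at u)" using U assms(7) by blast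
  then obtain D where gD: "(g has_derivative D) (at u)" unfolding differentiable_def by blast
  have linD: "linear D" using has_derivative_linear[OF gD] .
  define N where "N = real CARD('n)"
  have N2: "N \<ge> 2" using assms(1) unfolding N_def by simp
  define c where "c = - 1 / (N - 1)"
  define v where "v i = (\<chi> j. if j = i then 1 else c)" for i :: 'n
  have up: "u_plus u d i = u + d *\<^sub>R v i" for d i
    unfolding u_plus_def v_def c_def N_def by (simp add: vec_eq_iff)
  have um: "u_minus u d i = u + d *\<^sub>R (- v i)" for d i
    unfolding u_minus_def v_def c_def N_def by (simp add: vec_eq_iff)
  have sumv: "(\<Sum>j\<in>UNIV. v i $ j) = 0" for i
  proof -
    have "(\<Sum>j\<in>UNIV. v i $ j) = (\<Sum>j\<in>UNIV. (if j = i then 1 else c) * 1)"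
      unfolding v_def by simp
    also have "\<dots> = c * N + (1 - c)"
      using sum_if_const[of i c "\<lambda>_. 1"] unfolding N_def by simp
    also have "\<dots> = 0" unfolding c_def using N2 by (simp add: field_simps)
    finally show ?thesis .
  qed
  define m where "m = Min (range (\<lambda>j. u $ j))"
  have mpos: "m > 0" unfolding m_def using assms(8) by simp
  have mle: "m \<le> u $ j" for j unfolding m_def by simp
  have cb: "-1 \<le> c" "c \<le> 0" unfolding c_def using N2 by (auto simp: field_simps)
  have inS: "u + t *\<^sub>R w \<in> std_simplex" if "\<bar>t\<bar> \<le> m" "w = v i \<or> w = - v i" for t w i
  proof -
    have s1: "(\<Sum>j\<in>UNIV. u $ j) = 1" using assms(7) unfolding std_simplex_def by simp
    have "(\<Sum>j\<in>UNIV. (u + t *\<^sub>R w) $ j) = (\<Sum>j\<in>UNIV. u $ j) + t * (\<Sum>j\<in>UNIV. w $ j)"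
      by (simp add: sum.distrib sum_distrib_left)
    also have "(\<Sum>j\<in>UNIV. w $ j) = 0" using that(2) sumv[of i] by (auto simp: sum_negf)
    finally have "(\<Sum>j\<in>UNIV. (u + t *\<^sub>R w) $ j) = 1" using s1 by simp
    moreover have "0 \<le> (u + t *\<^sub>R w) $ j" for j
    proof -
      have "\<bar>w $ j\<bar> \<le> 1" using that(2) cb unfolding v_def by auto
      hence "\<bar>t\<bar> * \<bar>w $ j\<bar> \<le> \<bar>t\<bar> * 1" by (intro mult_left_mono) auto
      hence "\<bar>t * w $ j\<bar> \<le> m" using that(1) by (simp add: abs_mult)
      thus ?thesis using mle[of j] by simp
    qed
    ultimately show ?thesis unfolding std_simplex_def by simp
  qed
  have small: "\<exists>k::nat. k \<ge> 1 \<and> 0 < delta s \<rho> k \<and> delta s \<rho> k < e" if "e > 0" for e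
  proof -
    obtain k where k: "s / e < \<rho> ^ k" using real_arch_pow[OF assms(6)] by blast
    have pk: "\<rho> ^ k \<le> \<rho> ^ Suc k" using assms(6) by simp
    have pos: "0 < \<rho> ^ Suc k" using assms(6) by simp
    have "s / e < \<rho> ^ Suc k" using k pk by linarith
    hence "s < e * \<rho> ^ Suc k" using that by (simp add: field_simps)
    hence "s / \<rho> ^ Suc k < e" using pos by (simp add: field_simps)
    thus ?thesis unfolding delta_def using pos assms(5) by (intro exI[of _ "Suc k"]) auto
  qed
  have Dnn: "D w \<ge> 0" if w: "w = v i \<or> w = - v i"
    and H: "\<And>k. k \<ge> 1 \<Longrightarrow> u + delta s \<rho> k *\<^sub>R w \<in> std_simplex \<Longrightarrow> f u \<le> f (u + delta s \<rho> k *\<^sub>R w)"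
    for w i
  proof (rule ccontr)
    assume "\<not> D w \<ge> 0"
    hence "D w < 0" by simp
    from DERIV_neg_dec_right[OF dir_deriv[OF gD] this]
    obtain d where d: "d > 0" "\<forall>h>0. h < d \<longrightarrow> g (u + 0 *\<^sub>R w) > g (u + (0 + h) *\<^sub>R w)" by blast
    obtain k where k: "k \<ge> 1" "0 < delta s \<rho> k" "delta s \<rho> k < min d m"
      using small[of "min d m"] d mpos by auto
    have inn: "u + delta s \<rho> k *\<^sub>R w \<in> std_simplex" using inS[OF _ w] k by auto
    have "g u > g (u + delta s \<rho> k *\<^sub>R w)" using d k by auto
    hence "f u > f (u + delta s \<rho> k *\<^sub>R w)" using gf inn assms(7) by auto
    thus False using H[OF k(1) inn] by simp
  qed
  have Dv: "D (v i) = 0" for i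
  proof -
    have "D (v i) \<ge> 0"
      by (rule Dnn[of _ i]) (use hyp up in auto)
    moreover have "D (- v i) \<ge> 0"
      by (rule Dnn[of _ i]) (use hyp um in auto)
    moreover have "D (- v i) = - D (v i)" using linD by (simp add: linear_neg)
    ultimately show ?thesis by simp
  qed
  define a where "a j = D (axis j 1)" for j
  have Dexp: "D y = (\<Sum>j\<in>UNIV. y $ j * a j)" for y
  proof -
    have "D y = D (\<Sum>j\<in>UNIV. y $ j *\<^sub>R axis j 1)"
      using basis_expansion[of y] by (simp add: scalar_mult_eq_scaleR)
    also have "\<dots> = (\<Sum>j\<in>UNIV. y $ j * a j)"
      using linD by (simp add: linear_sum linear_scale a_def)
    finally show ?thesis .
  qed
  define A where "A = sum a UNIV"
  have aval: "a i = A / N" for i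
  proof -
    have "0 = (\<Sum>j\<in>UNIV. (if j = i then 1 else c) * a j)"
      using Dv[of i] Dexp[of "v i"] unfolding v_def by simp
    also have "\<dots> = c * A + (1 - c) * a i" unfolding A_def by (rule sum_if_const)
    finally have h0: "0 = c * A + (1 - c) * a i" .
    have c1: "(N - 1) * c = -1" unfolding c_def using N2 by simp
    moreover have c2: "(N - 1) * (1 - c) = N" using c1 by (simp add: algebra_simps)
    moreover have "(N - 1) * (c * A + (1 - c) * a i) = ((N - 1) * c) * A + ((N - 1) * (1 - c)) * a i"
      by (simp add: algebra_simps)
    ultimately have "(N - 1) * (c * A + (1 - c) * a i) = N * a i - A"
      by simp
    with h0 have "N * a i = A" by simp
    thus ?thesis using N2 by (simp add: field_simps)
  qed
  have D0: "D (x - u) = 0" if x: "x \<in> std_simplex" for x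
  proof -
    have "D (x - u) = (\<Sum>j\<in>UNIV. (x - u) $ j * (A / N))" using Dexp aval by simp
    also have "\<dots> = (A / N) * ((\<Sum>j\<in>UNIV. x $ j) - (\<Sum>j\<in>UNIV. u $ j))"
      by (simp add: sum_distrib_left sum_subtractf algebra_simps)
    also have "\<dots> = 0" using x assms(7) unfolding std_simplex_def by simp
    finally show ?thesis .
  qed
  have cvx: "convex (std_simplex :: (real ^ 'n) set)" using assms(2)[unfolded convex_on_def] by (rule conjunct1)
  show ?thesis
  proof (rule ballI, rule ccontr)
    fix x assume x: "x \<in> std_simplex" and nle: "\<not> f u \<le> f x"
    define e where "e = f x - f u"
    have e: "e < 0" using nle unfolding e_def by simp
    have der: "((\<lambda>t. g (u + t *\<^sub>R (x - u)) - t * (e / 2)) has_real_derivative (D (x - u) - e / 2)) (at 0)"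
      by (intro derivative_eq_intros dir_deriv[OF gD]) (auto intro: dir_deriv[OF gD])
    have "D (x - u) - e / 2 > 0" using D0[OF x] e by simp
    from DERIV_pos_inc_right[OF der this]
    obtain d where d: "d > 0" "\<forall>h>0. h < d \<longrightarrow> g (u + 0 *\<^sub>R (x - u)) - 0 * (e / 2) < g (u + (0 + h) *\<^sub>R (x - u)) - (0 + h) * (e / 2)"
      by blast
    define h where "h = min (d / 2) (1 / 2)"
    have h: "0 < h" "h < d" "h \<le> 1" unfolding h_def using d by auto
    have pt: "u + h *\<^sub>R (x - u) = (1 - h) *\<^sub>R u + h *\<^sub>R x" by (simp add: algebra_simps)
    have ptS: "u + h *\<^sub>R (x - u) \<in> std_simplex"
      unfolding pt using cvx x assms(7) h by (intro convexD) auto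
    have "g u < g (u + h *\<^sub>R (x - u)) - h * (e / 2)" using d h by auto
    hence lt: "f u < f (u + h *\<^sub>R (x - u)) - h * (e / 2)" using gf ptS assms(7) by auto
    have "f (u + h *\<^sub>R (x - u)) \<le> (1 - h) * f u + h * f x"
      unfolding pt using convex_onD[OF assms(2)] h x assms(7) by simp
    hence "f (u + h *\<^sub>R (x - u)) \<le> f u + h * e" unfolding e_def by (simp add: algebra_simps)
    with lt have "0 < h * (e / 2)" by simp
    moreover have "h * (e / 2) < 0" using h e by (simp add: mult_pos_neg)
    ultimately show False by simp
  qed
qed

end
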